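(* Under the hypotheses of Theorem 5.2 (stated below), let $(u_n)_{n\in\mathbb N}$ and $(v_n)_{n\in\mathbb N}$ be two positive solutions with the same $x_0$ (so set $u_0=v_0=x_0$), and let $\varepsilon_n=u_n-v_n$ for $n\ge0$. Then $2|\varepsilon_n|\le|\varepsilon_{n+1}|+|\varepsilon_{n-1}|$ for all $n\in\mathbb N$. Hypotheses: $\ell_n>0$, $\sigma_{n,0}>0$, $\kappa_n\in\mathbb R$, $\sigma_{n,\pm1}\ge0$ for $n\in\mathbb N$; $\sigma_n=\max(\sigma_{n,-1},\sigma_{n,1})$; $\mathbb N=\mathbb N_a\cup\mathbb N_b$ disjointly with $2\sigma_n\le\sigma_{n,0}$ for $n\in\mathbb N_a$ and with $\sigma_n\le\sigma_{n,0}<2\sigma_n$ and $-2(\sigma_{n,0}-\sigma_n)\sqrt{\ell_n}\le\kappa_n\sqrt{2\sigma_n-\sigma_{n,0}}$ for $n\in\mathbb N_b$; and, if $1\in\mathbb N_b$, $-2(\sigma_{1,0}-\sigma_1)\sqrt{\ell_1}\le(\sigma_{1,-1}x_0+\kappa_1)\sqrt{2\sigma_1-\sigma_{1,0}}$.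
   Context: $\mathbb N=\{1,2,3,\dots\}$. A positive solution with given $x_0\in\mathbb R$ is a sequence $(x_n)_{n\in\mathbb N}$ of positive reals satisfying $\ell_n = x_n(\sigma_{n,1}x_{n+1}+\sigma_{n,0}x_n+\sigma_{n,-1}x_{n-1})+\kappa_n x_n$ for all $n\in\mathbb N$. *)

theory Defs
  imports Complex_Main
begin

text \<open>Sequences indexed by the positive integers are modelled as functions nat => real;
  only the values at n >= 1 matter. The solution sequence x is extended by x 0 = x0.\<close>

definition positive_solution ::
  "(nat \<Rightarrow> real) \<Rightarrow> (nat \<Rightarrow> real) \<Rightarrow> (nat \<Rightarrow> real) \<Rightarrow> (nat \<Rightarrow> real) \<Rightarrow> (nat \<Rightarrow> real)
   \<Rightarrow> real \<Rightarrow> (nat \<Rightarrow> real) \<Rightarrow> bool" where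
  "positive_solution l sp s0 sm \<kappa> x0 x \<longleftrightarrow>
     x 0 = x0 \<and>
     (\<forall>n\<ge>1. x n > 0) \<and>
     (\<forall>n\<ge>1. l n = x n * (sp n * x (n+1) + s0 n * x n + sm n * x (n-1)) + \<kappa> n * x n)"

end

theory Submission
  imports Defs
begin

lemma bound_aux:
  fixes x l s0 sg k :: real
  assumes x: "x > 0" and l: "l > 0" and s0: "s0 > 0" and d: "2*sg - s0 > 0"
    and eq: "l \<ge> s0 * x^2 + k * x"
    and c: "- 2 * (s0 - sg) * sqrt l \<le> k * sqrt (2*sg - s0)"
  shows "x * x * (2*sg - s0) \<le> l"
proof -
  define a where "a = sqrt l"
  define cc where "cc = sqrt (2*sg - s0)"
  have a2: "a^2 = l" using l by (simp add: a_def)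
  have c2: "cc^2 = 2*sg - s0" using d by (simp add: cc_def)
  have apos: "a > 0" using l by (simp add: a_def)
  have cpos: "cc > 0" using d by (simp add: cc_def)
  have kc: "k * cc \<ge> (cc^2 - s0) * a" proof -
    have "-2*(s0-sg) = cc^2 - s0" using c2 by simp
    thus ?thesis using c unfolding a_def[symmetric] cc_def[symmetric] by simp
  qed
  show ?thesis
  proof (rule ccontr)
    assume "\<not> ?thesis"
    hence "x*x*cc^2 > a^2" using a2 c2 by simp
    hence "(x*cc)^2 > a^2" by (simp add: power2_eq_square algebra_simps)
    hence y: "x*cc > a" using apos cpos x by (smt (verit) power_mono mult_pos_pos)
    have "k*cc*(x*cc) \<ge> (cc^2 - s0) * a * (x*cc)" using kc x cpos by (intro mult_right_mono) auto
    moreover have "s0*(x*cc)*(x*cc - a) + cc^2*a*(x*cc - a) > 0"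
      using y s0 x cpos apos by (intro add_nonneg_pos) (auto intro!: mult_nonneg_nonneg mult_pos_pos simp: less_imp_le)
    ultimately have "s0*x^2*cc^2 + k*x*cc^2 > a^2*cc^2"
      by (simp add: power2_eq_square algebra_simps)
    hence "(s0*x^2 + k*x) * cc^2 > l * cc^2" using a2 by (simp add: algebra_simps)
    hence "s0*x^2 + k*x > l" using cpos by (simp add: mult_less_cancel_right)
    thus False using eq by simp
  qed
qed

theorem mainTheorem5:
  fixes l sp s0 sm \<kappa> :: "nat \<Rightarrow> real" and x0 :: real
    and Na Nb :: "nat set" and u v :: "nat \<Rightarrow> real"
  assumes l_pos: "\<And>n. n \<ge> 1 \<Longrightarrow> l n > 0"
    and s0_pos: "\<And>n. n \<ge> 1 \<Longrightarrow> s0 n > 0"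
    and sp_nonneg: "\<And>n. n \<ge> 1 \<Longrightarrow> sp n \<ge> 0"
    and sm_nonneg: "\<And>n. n \<ge> 1 \<Longrightarrow> sm n \<ge> 0"
    and partition: "Na \<union> Nb = {1..}" "Na \<inter> Nb = {}"
    and Na_cond: "\<And>n. n \<in> Na \<Longrightarrow> 2 * max (sm n) (sp n) \<le> s0 n"
    and Nb_cond1: "\<And>n. n \<in> Nb \<Longrightarrow> max (sm n) (sp n) \<le> s0 n \<and> s0 n < 2 * max (sm n) (sp n)"
    and Nb_cond2: "\<And>n. n \<in> Nb \<Longrightarrow>
        - 2 * (s0 n - max (sm n) (sp n)) * sqrt (l n) \<le> \<kappa> n * sqrt (2 * max (sm n) (sp n) - s0 n)"
    and first: "1 \<in> Nb \<Longrightarrow>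
        - 2 * (s0 1 - max (sm 1) (sp 1)) * sqrt (l 1) \<le> (sm 1 * x0 + \<kappa> 1) * sqrt (2 * max (sm 1) (sp 1) - s0 1)"
    and u_sol: "positive_solution l sp s0 sm \<kappa> x0 u"
    and v_sol: "positive_solution l sp s0 sm \<kappa> x0 v"
  shows "\<forall>n\<ge>1. 2 * \<bar>u n - v n\<bar> \<le> \<bar>u (n+1) - v (n+1)\<bar> + \<bar>u (n-1) - v (n-1)\<bar>"
proof (intro allI impI)
  fix n :: nat assume n: "n \<ge> 1"
  define sg where "sg = max (sm n) (sp n)"
  have bnd: "x n * x n * (2*sg - s0 n) \<le> l n" if xs: "positive_solution l sp s0 sm \<kappa> x0 x" for x
  proof -
    have xn: "x n > 0" and eqx: "l n = x n * (sp n * x (n+1) + s0 n * x n + sm n * x (n-1)) + \<kappa> n * x n"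
      and x0d: "x 0 = x0" and x1: "x (n+1) > 0"
      using xs n unfolding positive_solution_def by auto
    show ?thesis
    proof (cases "n \<in> Nb")
      case False
      hence "n \<in> Na" using partition n by auto
      hence "2*sg - s0 n \<le> 0" using Na_cond sg_def by auto
      hence "x n * x n * (2*sg - s0 n) \<le> 0" by (simp add: mult_nonneg_nonpos)
      thus ?thesis using l_pos[OF n] by linarith
    next
      case True
      note nb = Nb_cond1[OF True]
      have d: "2*sg - s0 n > 0" using nb sg_def by auto
      have t1: "x n * (sp n * x (n+1)) \<ge> 0" using xn x1 sp_nonneg[OF n] by simp
      show ?thesis
      proof (cases "n = 1")
        case True
        have eq: "l n \<ge> s0 n * (x n)^2 + (sm n * x0 + \<kappa> n) * x n"
          using eqx t1 True x0d by (simp add: power2_eq_square algebra_simps)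
        show ?thesis
          by (rule bound_aux[OF xn l_pos[OF n] s0_pos[OF n] d eq]) (use first True \<open>n \<in> Nb\<close> sg_def in auto)
      next
        case False
        hence "x (n-1) > 0" using xs n unfolding positive_solution_def by auto
        hence t2: "x n * (sm n * x (n-1)) \<ge> 0" using xn sm_nonneg[OF n] by simp
        have eq: "l n \<ge> s0 n * (x n)^2 + \<kappa> n * x n"
          using eqx t1 t2 by (simp add: power2_eq_square algebra_simps)
        show ?thesis
          by (rule bound_aux[OF xn l_pos[OF n] s0_pos[OF n] d eq]) (use Nb_cond2[OF True] sg_def in auto)
      qed
    qed
  qed
  have bu: "u n * u n * (2*sg - s0 n) \<le> l n" using bnd[OF u_sol] .
  have bv: "v n * v n * (2*sg - s0 n) \<le> l n" using bnd[OF v_sol] .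
  have un: "u n > 0" and eu: "l n = u n * (sp n * u (n+1) + s0 n * u n + sm n * u (n-1)) + \<kappa> n * u n"
    using u_sol n unfolding positive_solution_def by auto
  have vn: "v n > 0" and ev: "l n = v n * (sp n * v (n+1) + s0 n * v n + sm n * v (n-1)) + \<kappa> n * v n"
    using v_sol n unfolding positive_solution_def by auto
  define e where "e = u n - v n"
  define e1 where "e1 = u (n+1) - v (n+1)"
  define em where "em = u (n-1) - v (n-1)"
  define p where "p = u n * v n"
  have ppos: "p > 0" using un vn by (simp add: p_def)
  have key: "- e * (l n + p * s0 n) = p * (sp n * e1 + sm n * em)"
  proof -
    have "l n * v n = u n * v n * (sp n * u (n+1) + s0 n * u n + sm n * u (n-1) + \<kappa> n)"
      using eu by (simp add: algebra_simps)
    moreover have "l n * u n = u n * v n * (sp n * v (n+1) + s0 n * v n + sm n * v (n-1) + \<kappa> n)"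
      using ev by (simp add: algebra_simps)
    ultimately show ?thesis unfolding e_def e1_def em_def p_def by (simp add: algebra_simps)
  qed
  have lp: "l n \<ge> p * (2*sg - s0 n)"
  proof (cases "2*sg - s0 n \<ge> 0")
    case True
    have "p * (2*sg - s0 n) \<le> max (u n) (v n) * max (u n) (v n) * (2*sg - s0 n)"
      unfolding p_def using True un vn
      by (intro mult_right_mono mult_mono) auto
    also have "\<dots> \<le> l n" using bu bv by (simp add: max_def)
    finally show ?thesis .
  next
    case False
    hence "p * (2*sg - s0 n) \<le> 0" using ppos by (simp add: mult_nonneg_nonpos)
    thus ?thesis using l_pos[OF n] by linarith
  qed
  have A: "\<bar>e\<bar> * (l n + p * s0 n) \<le> p * sg * (\<bar>e1\<bar> + \<bar>em\<bar>)"
  proof -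
    have "\<bar>e\<bar> * (l n + p * s0 n) = \<bar>- e * (l n + p * s0 n)\<bar>"
      using l_pos[OF n] ppos s0_pos[OF n] by (simp add: abs_mult)
    also have "\<dots> = p * \<bar>sp n * e1 + sm n * em\<bar>" using key ppos by (simp add: abs_mult)
    also have "\<bar>sp n * e1 + sm n * em\<bar> \<le> sg * (\<bar>e1\<bar> + \<bar>em\<bar>)"
    proof -
      have "\<bar>sp n * e1\<bar> \<le> sg * \<bar>e1\<bar>" using sp_nonneg[OF n] by (simp add: abs_mult sg_def mult_right_mono)
      moreover have "\<bar>sm n * em\<bar> \<le> sg * \<bar>em\<bar>" using sm_nonneg[OF n] by (simp add: abs_mult sg_def mult_right_mono)
      ultimately show ?thesis by (simp add: algebra_simps)
    qed
    hence "p * \<bar>sp n * e1 + sm n * em\<bar> \<le> p * (sg * (\<bar>e1\<bar> + \<bar>em\<bar>))" using ppos by simp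
    finally show ?thesis by (simp add: algebra_simps)
  qed
  have B: "\<bar>e\<bar> * (2 * sg * p) \<le> \<bar>e\<bar> * (l n + p * s0 n)"
    using lp by (intro mult_left_mono) (auto simp: algebra_simps)
  have "p * (sg * (2 * \<bar>e\<bar>)) \<le> p * (sg * (\<bar>e1\<bar> + \<bar>em\<bar>))" using A B by (simp add: algebra_simps)
  hence C: "sg * (2 * \<bar>e\<bar>) \<le> sg * (\<bar>e1\<bar> + \<bar>em\<bar>)" using ppos by simp
  show "2 * \<bar>u n - v n\<bar> \<le> \<bar>u (n+1) - v (n+1)\<bar> + \<bar>u (n-1) - v (n-1)\<bar>"
  proof (cases "sg > 0")
    case True
    thus ?thesis using C unfolding e_def e1_def em_def by simp
  next
    case False
    hence "sg = 0" using sp_nonneg[OF n] sg_def by auto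
    hence "\<bar>e\<bar> * (l n + p * s0 n) \<le> 0" using A by simp
    moreover have "l n + p * s0 n > 0" using l_pos[OF n] ppos s0_pos[OF n] by (simp add: add_pos_pos)
    ultimately have "e = 0" by (smt (verit) mult_pos_pos abs_ge_zero zero_less_abs_iff)
    thus ?thesis unfolding e_def by simp
  qed
qed

end
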